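(* Let $Q$ be a Moufang loop, $(c,f)$ a left pseudoautomorphism of $Q$, and $x\in Q$. Then $\big(x^{-1}f^{-1}(c^{-1}f(x)c),\ \mu_{f,x}\big)$ is a left pseudoautomorphism of $Q$, where $\mu_{f,x}=R_x^{-1}f^{-1}R_{f(x)}f$.
   Context: A loop is Moufang if it satisfies $xy\cdot zx=(x\cdot yz)x$ for all $x,y,z$. $L_x(y)=xy$, $R_x(y)=yx$. A pair $(c,f)$ with $c\in Q$ and $f$ a permutation of $Q$ is a (left) pseudoautomorphism of $Q$ if $cf(x)\cdot f(y)=cf(xy)$ for all $x,y\in Q$; $c$ is called a companion of $f$. *)

theory Defs
  imports Main
begin

definition loop :: "('a \<Rightarrow> 'a \<Rightarrow> 'a) \<Rightarrow> 'a \<Rightarrow> bool" where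
  "loop m e \<longleftrightarrow> (\<forall>x. m e x = x \<and> m x e = x)
     \<and> (\<forall>a b. \<exists>!x. m a x = b) \<and> (\<forall>a b. \<exists>!y. m y a = b)"

definition moufang_loop :: "('a \<Rightarrow> 'a \<Rightarrow> 'a) \<Rightarrow> 'a \<Rightarrow> bool" where
  "moufang_loop m e \<longleftrightarrow> loop m e
     \<and> (\<forall>x y z. m (m x y) (m z x) = m (m x (m y z)) x)"

definition L_mult :: "('a \<Rightarrow> 'a \<Rightarrow> 'a) \<Rightarrow> 'a \<Rightarrow> 'a \<Rightarrow> 'a" where
  "L_mult m x = (\<lambda>y. m x y)"

definition R_mult :: "('a \<Rightarrow> 'a \<Rightarrow> 'a) \<Rightarrow> 'a \<Rightarrow> 'a \<Rightarrow> 'a" where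
  "R_mult m x = (\<lambda>y. m y x)"

text \<open>The inverse x^{-1}: the unique y with x y = e (in a Moufang loop this is two-sided).\<close>
definition loop_inv :: "('a \<Rightarrow> 'a \<Rightarrow> 'a) \<Rightarrow> 'a \<Rightarrow> 'a \<Rightarrow> 'a" where
  "loop_inv m e x = (THE y. m x y = e)"

definition left_pseudoaut :: "('a \<Rightarrow> 'a \<Rightarrow> 'a) \<Rightarrow> 'a \<Rightarrow> ('a \<Rightarrow> 'a) \<Rightarrow> bool" where
  "left_pseudoaut m c f \<longleftrightarrow> bij f \<and> (\<forall>x y. m (m c (f x)) (f y) = m c (f (m x y)))"

end

theory Submission
  imports Defs
begin

definition autot :: "('a \<Rightarrow> 'a \<Rightarrow> 'a) \<Rightarrow> ('a \<Rightarrow> 'a) \<Rightarrow> ('a \<Rightarrow> 'a) \<Rightarrow> ('a \<Rightarrow> 'a) \<Rightarrow> bool" where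
  "autot m \<alpha> \<beta> \<gamma> \<longleftrightarrow> bij \<alpha> \<and> bij \<beta> \<and> bij \<gamma> \<and> (\<forall>a b. m (\<alpha> a) (\<beta> b) = \<gamma> (m a b))"

lemma autot_comp:
  assumes "autot m \<alpha> \<beta> \<gamma>" "autot m \<alpha>' \<beta>' \<gamma>'"
  shows "autot m (\<alpha> \<circ> \<alpha>') (\<beta> \<circ> \<beta>') (\<gamma> \<circ> \<gamma>')"
  using assms unfolding autot_def by (auto intro: bij_comp)

lemma autot_inv:
  assumes "autot m \<alpha> \<beta> \<gamma>"
  shows "autot m (inv \<alpha>) (inv \<beta>) (inv \<gamma>)"
proof -
  have b: "bij \<alpha>" "bij \<beta>" "bij \<gamma>" and h: "\<And>a b. m (\<alpha> a) (\<beta> b) = \<gamma> (m a b)"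
    using assms unfolding autot_def by auto
  have "m (inv \<alpha> a) (inv \<beta> b) = inv \<gamma> (m a b)" for a b
  proof -
    have "\<gamma> (m (inv \<alpha> a) (inv \<beta> b)) = m a b"
      using h[of "inv \<alpha> a" "inv \<beta> b"] b by (simp add: bij_is_surj surj_f_inv_f)
    then show ?thesis using b(3) by (metis bij_inv_eq_iff)
  qed
  then show ?thesis using b unfolding autot_def by (simp add: bij_imp_bij_inv)
qed

locale ml =
  fixes m :: "'a \<Rightarrow> 'a \<Rightarrow> 'a" and e :: 'a
  assumes ml: "moufang_loop m e"
begin

lemma lid[simp]: "m e x = x" and rid[simp]: "m x e = x"
  using ml unfolding moufang_loop_def loop_def by auto

lemma M: "m (m x y) (m z x) = m (m x (m y z)) x"
  using ml unfolding moufang_loop_def by auto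

lemma lcancel: "m a x = m a y \<Longrightarrow> x = y"
  using ml unfolding moufang_loop_def loop_def by metis

lemma rcancel: "m x a = m y a \<Longrightarrow> x = y"
  using ml unfolding moufang_loop_def loop_def by metis

lemma lsurj: "\<exists>x. m a x = b"
  using ml unfolding moufang_loop_def loop_def by metis

lemma rsurj: "\<exists>x. m x a = b"
  using ml unfolding moufang_loop_def loop_def by metis

lemma bijL: "bij (m a)"
  unfolding bij_def inj_def surj_def using lcancel lsurj by metis

lemma bijR: "bij (R_mult m a)"
  unfolding bij_def inj_def surj_def R_mult_def using rcancel rsurj by metis

lemma rinv: "m x (loop_inv m e x) = e"
proof -
  have "\<exists>!y. m x y = e" using ml unfolding moufang_loop_def loop_def by auto
  then show ?thesis unfolding loop_inv_def by (rule theI')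
qed

lemma aux1: "m x (m (loop_inv m e x) z) = z"
proof -
  have "m (m x (loop_inv m e x)) (m z x) = m (m x (m (loop_inv m e x) z)) x" by (rule M)
  then have "m z x = m (m x (m (loop_inv m e x) z)) x" by (simp add: rinv)
  then show ?thesis using rcancel by metis
qed

lemma LIP: "m (loop_inv m e x) (m x y) = y"
  using aux1[of x "m x y"] lcancel by metis

lemma invL: "inv (m x) w = m (loop_inv m e x) w"
  using bijL[of x] aux1[of x w] by (metis bij_inv_eq_iff)

lemma flex: "m x (m z x) = m (m x z) x"
  using M[of x e z] by simp

lemma id2: "m (m (loop_inv m e c) a) c = m (loop_inv m e c) (m a c)"
proof -
  define b where "b = m (loop_inv m e c) a"
  have a: "a = m c b" unfolding b_def by (simp add: aux1)
  have "m (loop_inv m e c) (m a c) = m (loop_inv m e c) (m c (m b c))"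
    using a flex by simp
  also have "\<dots> = m b c" by (rule LIP)
  finally show ?thesis unfolding b_def by simp
qed

end

theorem mainTheorem11:
  fixes m :: "'a \<Rightarrow> 'a \<Rightarrow> 'a" and e c x :: 'a and f :: "'a \<Rightarrow> 'a"
  assumes "moufang_loop m e"
    and "left_pseudoaut m c f"
  shows "left_pseudoaut m
           (m (loop_inv m e x) (inv f (m (m (loop_inv m e c) (f x)) c)))
           (inv (R_mult m x) \<circ> inv f \<circ> R_mult m (f x) \<circ> f)"
proof -
  interpret ml m e by (rule ml.intro) (rule assms(1))
  have bf: "bij f" and pf: "\<And>a b. m (m c (f a)) (f b) = m c (f (m a b))"
    using assms(2) unfolding left_pseudoaut_def by auto
  have fe: "f e = e"
  proof -
    obtain y where y: "f y = e" using bf by (metis bij_pointE)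
    have "m (m c (f e)) (f y) = m c (f (m e y))" by (rule pf)
    then have "m c (f e) = m c e" using y by simp
    then show ?thesis using lcancel by metis
  qed
  have A: "autot m (m c \<circ> f) f (m c \<circ> f)"
    unfolding autot_def using bf bijL pf by (auto intro: bij_comp)
  have T: "autot m (m y) (R_mult m y) ((\<lambda>w. m w y) \<circ> m y)" for y
    unfolding autot_def using bijL[of y] bijR[of y] bijR[unfolded R_mult_def, of y]
    by (simp add: bij_comp R_mult_def M)
  define \<alpha> where "\<alpha> = inv (m x) \<circ> inv (m c \<circ> f) \<circ> m (f x) \<circ> (m c \<circ> f)"
  define \<beta> where "\<beta> = inv (R_mult m x) \<circ> inv f \<circ> R_mult m (f x) \<circ> f"
  define \<gamma> where "\<gamma> = inv ((\<lambda>w. m w x) \<circ> m x) \<circ> inv (m c \<circ> f) \<circ> ((\<lambda>w. m w (f x)) \<circ> m (f x)) \<circ> (m c \<circ> f)"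
  have P: "autot m \<alpha> \<beta> \<gamma>"
    unfolding \<alpha>_def \<beta>_def \<gamma>_def
    by (intro autot_comp autot_inv A T)
  then have Pb: "\<And>a b. m (\<alpha> a) (\<beta> b) = \<gamma> (m a b)" unfolding autot_def by auto
  have be: "\<beta> e = e"
  proof -
    have "inv f (f x) = x" using bf by (simp add: bij_is_inj)
    moreover have "inv (R_mult m x) x = e"
      using bijR[of x] by (metis R_mult_def bij_inv_eq_iff lid)
    ultimately show ?thesis unfolding \<beta>_def by (simp add: fe R_mult_def)
  qed
  have ag: "\<alpha> = \<gamma>" using Pb[of _ e] be by (auto simp: fun_eq_iff)
  have gb: "\<gamma> b = m (\<alpha> e) (\<beta> b)" for b using Pb[of e b] by simp
  have invA: "inv (m c \<circ> f) w = inv f (m (loop_inv m e c) w)" for w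
    using bf bijL[of c] by (simp add: o_inv_distrib invL)
  have ae: "\<alpha> e = m (loop_inv m e x) (inv f (m (m (loop_inv m e c) (f x)) c))"
    unfolding \<alpha>_def by (simp add: fe invA invL id2)
  have bij\<beta>: "bij \<beta>" using P unfolding autot_def by auto
  show ?thesis
    unfolding left_pseudoaut_def \<beta>_def[symmetric] ae[symmetric]
  proof (intro conjI allI bij\<beta>)
    fix y z
    have "m (m (\<alpha> e) (\<beta> y)) (\<beta> z) = m (\<alpha> y) (\<beta> z)" using gb[of y] ag by simp
    also have "\<dots> = \<gamma> (m y z)" by (rule Pb)
    also have "\<dots> = m (\<alpha> e) (\<beta> (m y z))" by (rule gb)
    finally show "m (m (\<alpha> e) (\<beta> y)) (\<beta> z) = m (\<alpha> e) (\<beta> (m y z))" .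
  qed
qed

end
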